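(* Fix $L<M$ and $\zeta_0\in\mathbb R$. There are $c>0$ and $C\in\mathbb R$ such that for all $n$ large enough $$|P^{(n)}(t,y,\zeta)|\le Ce^{-c(y+\zeta)}$$ for all $y\ge0$, $\zeta\ge\zeta_0$, uniformly in $t\in[L,M]$.
   Context: $p_r^{(n)}(x)=\frac{-1}{2\pi i}\oint_{\Gamma_1}\frac{dz}{z}\frac{1}{z^x(1-z)^{n-r}(1+1/z)^r}$, $\Gamma_1$ a small counterclockwise circle around $1$. Scaling (integer parts neglected): $l=n(\frac12+\frac1{2\sqrt2})+2^{-7/6}tn^{2/3}$, $j=2^{-5/6}yn^{1/3}$, $v=n/\sqrt2+2^{-5/6}\zeta n^{1/3}$ (so $t\in[L,M]$ corresponds to $l\in[b_n(L)/2,b_n(M)/2]$ with $b_n(\tau)=n(1+1/\sqrt2)+2^{-1/6}\tau n^{2/3}$). $P^{(n)}(t,y,\zeta)=2^{-5/6}n^{1/3}2^{n/2}(\sqrt2+1)^{-j-2^{-5/6}\zeta n^{1/3}+2^{-1/6}tn^{2/3}}p_l^{(n)}(v+j)$. *)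

theory Defs
  imports "HOL-Complex_Analysis.Complex_Analysis"
begin

text \<open>The kernel p_r^(n)(x), defined by the contour integral over a small
counterclockwise circle around 1 (radius 1/2, which encloses neither 0 nor -1).
Integer exponents are rendered with powi.\<close>
definition pker :: "nat \<Rightarrow> int \<Rightarrow> int \<Rightarrow> complex" where
  "pker n r x = - (1 / (2 * of_real pi * \<i>)) *
     contour_integral (circlepath 1 (1/2::real))
       (\<lambda>z. (1 / z) * (1 / (z powi x * (1 - z) powi (int n - r) * (1 + 1 / z) powi r)))"

definition lsc :: "nat \<Rightarrow> real \<Rightarrow> int" where
  "lsc n t = \<lfloor>real n * (1/2 + 1 / (2 * sqrt 2)) + 2 powr (-7/6) * t * real n powr (2/3)\<rfloor>"

definition jsc :: "nat \<Rightarrow> real \<Rightarrow> int" where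
  "jsc n y = \<lfloor>2 powr (-5/6) * y * real n powr (1/3)\<rfloor>"

definition vsc :: "nat \<Rightarrow> real \<Rightarrow> int" where
  "vsc n \<zeta> = \<lfloor>real n / sqrt 2 + 2 powr (-5/6) * \<zeta> * real n powr (1/3)\<rfloor>"

definition Psc :: "nat \<Rightarrow> real \<Rightarrow> real \<Rightarrow> real \<Rightarrow> complex" where
  "Psc n t y \<zeta> =
     of_real (2 powr (-5/6) * real n powr (1/3) * 2 powr (real n / 2) *
       (sqrt 2 + 1) powr (- real_of_int (jsc n y) - 2 powr (-5/6) * \<zeta> * real n powr (1/3)
                          + 2 powr (-1/6) * t * real n powr (2/3)))
     * pker n (lsc n t) (vsc n \<zeta> + jsc n y)"

end

theory Submission
  imports Defs
begin


definition fk :: "int \<Rightarrow> int \<Rightarrow> int \<Rightarrow> complex \<Rightarrow> complex" where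
  "fk m r x z = (1 / z) * (1 / (z powi x * (1 - z) powi m * (1 + 1 / z) powi r))"

lemma norm_fk:
  assumes "z \<noteq> 0" "z \<noteq> 1" "1 + z \<noteq> 0"
  shows "norm (fk m r x z) = norm z powr (real_of_int (r - x - 1)) * norm (1 + z) powr (- real_of_int r)
            * norm (1 - z) powr (- real_of_int m)"
proof -
  have n1: "norm (1 + 1/z) = norm (1+z) / norm z"
  proof -
    have "1 + 1/z = (1+z)/z" using assms by (simp add: field_simps)
    thus ?thesis by (simp add: norm_divide)
  qed
  have pz: "norm z > 0" and p1: "norm (1+z) > 0" and p2: "norm (1-z) > 0" using assms by auto
  have "norm (fk m r x z) = (1 / norm z) * (1 / (norm z powi x * norm (1-z) powi m * (norm (1+z) / norm z) powi r))"
    unfolding fk_def by (simp add: norm_mult norm_divide norm_power_int n1)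
  also have "\<dots> = (1 / norm z) * (1 / (norm z powr x * norm (1-z) powr m * (norm (1+z) / norm z) powr r))"
    using pz p1 p2 by (simp add: powr_real_of_int')
  also have "\<dots> = norm z powr (real_of_int (r - x - 1)) * norm (1 + z) powr (- real_of_int r)
            * norm (1 - z) powr (- real_of_int m)"
    using pz p1 p2 by (simp add: powr_divide powr_diff powr_minus powr_add divide_simps)
  finally show ?thesis .
qed


lemma deriv_G: "u > 0 \<Longrightarrow> w > 0 \<Longrightarrow> u = 1+\<rho>^2-2*\<rho>*y \<Longrightarrow> w = 4+\<rho>^2-4*\<rho>*y \<Longrightarrow> DERIV (\<lambda>c. (a/2)*ln(1+\<rho>^2-2*\<rho>*c) - (r/2)*ln(4+\<rho>^2-4*\<rho>*(c::real)) + (\<rho>*\<Delta>/4)*(1-c)) y :> ((a/2)*(-2*\<rho>/u) - (r/2)*(-4*\<rho>/w) - \<rho>*\<Delta>/4)"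
proof -
  assume u0: "u > 0" and w0: "w > 0" and ud: "u = 1+\<rho>^2-2*\<rho>*y" and wd: "w = 4+\<rho>^2-4*\<rho>*y"
  have d1: "DERIV (\<lambda>c. 1+\<rho>^2-2*\<rho>*c) y :> -2*\<rho>" by (auto intro!: derivative_eq_intros)
  have d2: "DERIV (\<lambda>c. 4+\<rho>^2-4*\<rho>*c) y :> -4*\<rho>" by (auto intro!: derivative_eq_intros)
  have l1: "DERIV (\<lambda>c. ln(1+\<rho>^2-2*\<rho>*c)) y :> inverse u * (-2*\<rho>)"
    using DERIV_chain2[OF DERIV_ln d1] u0 ud by simp
  have l2: "DERIV (\<lambda>c. ln(4+\<rho>^2-4*\<rho>*c)) y :> inverse w * (-4*\<rho>)"
    using DERIV_chain2[OF DERIV_ln d2] w0 wd by simp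
  have d3: "DERIV (\<lambda>c. (\<rho>*\<Delta>/4)*(1-c)) y :> (\<rho>*\<Delta>/4)*(-1)" by (auto intro!: derivative_eq_intros)
  have D: "DERIV (\<lambda>c. (a/2)*ln(1+\<rho>^2-2*\<rho>*c) - (r/2)*ln(4+\<rho>^2-4*\<rho>*(c::real)) + (\<rho>*\<Delta>/4)*(1-c)) y :>
     (a/2)*(inverse u * (-2*\<rho>)) - (r/2)*(inverse w * (-4*\<rho>)) + (\<rho>*\<Delta>/4)*(-1)"
    by (rule DERIV_add[OF DERIV_diff[OF DERIV_cmult[OF l1] DERIV_cmult[OF l2]] d3])
  have eq: "(a/2)*(inverse u * (-2*\<rho>)) - (r/2)*(inverse w * (-4*\<rho>)) + (\<rho>*\<Delta>/4)*(-1)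
     = (a/2)*(-2*\<rho>/u) - (r/2)*(-4*\<rho>/w) - \<rho>*\<Delta>/4" by (simp only: divide_inverse mult_ac)
  from D eq show ?thesis by (rule DERIV_cong)
qed

lemma circ_real:
  fixes a r \<rho> c \<Delta> :: real
  assumes "0 < \<rho>" "\<rho> < 1" "r \<ge> 0" "\<Delta> = 2*r*(1-\<rho>)^2/(2-\<rho>)^2 - a" "\<Delta> > 0" "-1 \<le> c" "c \<le> 1"
  shows "(a/2)*ln(1+\<rho>^2-2*\<rho>*c) - (r/2)*ln(4+\<rho>^2-4*\<rho>*c) \<le> a*ln(1-\<rho>) - r*ln(2-\<rho>) - (\<rho>*\<Delta>/4)*(1-c)"
proof -
  define G where "G = (\<lambda>c. (a/2)*ln(1+\<rho>^2-2*\<rho>*c) - (r/2)*ln(4+\<rho>^2-4*\<rho>*c) + (\<rho>*\<Delta>/4)*(1-c))"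
  have "G c \<le> G 1"
  proof (rule DERIV_nonneg_imp_nondecreasing[OF assms(7)])
    fix y assume y: "c \<le> y" "y \<le> 1"
    define u where "u = 1+\<rho>^2-2*\<rho>*y"
    define w where "w = 4+\<rho>^2-4*\<rho>*y"
    have ue: "u = (1-\<rho>)^2 + 2*\<rho>*(1-y)" unfolding u_def by (simp add: power2_eq_square algebra_simps)
    have we: "w = (2-\<rho>)^2 + 4*\<rho>*(1-y)" unfolding w_def by (simp add: power2_eq_square algebra_simps)
    have py: "\<rho>*(1-y) \<ge> 0" using y assms by simp
    have u0: "u > 0" unfolding ue using py assms by (simp add: add_pos_nonneg)
    have w0: "w > 0" unfolding we using py assms by (simp add: add_pos_nonneg)
    have "\<rho>*(1-y) \<le> \<rho>*2" using y assms by (intro mult_left_mono) auto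
    moreover have "\<rho>*\<rho> \<le> \<rho>" using assms by (simp add: mult_left_le)
    moreover have "(1-\<rho>)^2 = 1 - 2*\<rho> + \<rho>*\<rho>" by (simp add: power2_eq_square algebra_simps)
    ultimately have u4: "u \<le> 4" unfolding ue using assms by linarith
    have "u * (2-\<rho>)^2 - w * (1-\<rho>)^2 = \<rho>*(1-y)*(4-2*\<rho>^2)"
      unfolding ue we by (simp add: power2_eq_square algebra_simps)
    moreover have "4-2*\<rho>^2 \<ge> 0" unfolding power2_eq_square using assms \<open>\<rho>*\<rho> \<le> \<rho>\<close> by linarith
    ultimately have "u * (2-\<rho>)^2 - w * (1-\<rho>)^2 \<ge> 0" using py by simp
    hence uw: "u * (2-\<rho>)^2 \<ge> w * (1-\<rho>)^2" by simp
    have R: "u / w \<ge> (1-\<rho>)^2/(2-\<rho>)^2"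
      using uw u0 w0 assms by (simp add: divide_simps mult.commute)
    have "2*r*(u/w) \<ge> 2*r*((1-\<rho>)^2/(2-\<rho>)^2)"
      using R assms(3) by (intro mult_left_mono) auto
    hence "2*r*(u/w) - a \<ge> \<Delta>" using assms(4) by simp
    hence "(2*r*(u/w) - a)/u \<ge> \<Delta>/u" using u0 by (simp add: divide_right_mono)
    moreover have "\<Delta>/u \<ge> \<Delta>/4" using u0 u4 assms(5) by (intro divide_left_mono) auto
    moreover have "(2*r*(u/w) - a)/u = 2*r/w - a/u" using u0 w0 by (simp add: field_simps)
    ultimately have key: "2*r/w - a/u \<ge> \<Delta>/4" by linarith
    have D: "DERIV G y :> ((a/2)*(-2*\<rho>/u) - (r/2)*(-4*\<rho>/w) - \<rho>*\<Delta>/4)"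
      unfolding G_def using deriv_G[OF u0 w0 u_def w_def] .
    have "(a/2)*(-2*\<rho>/u) - (r/2)*(-4*\<rho>/w) - \<rho>*\<Delta>/4 = \<rho> * (2*r/w - a/u - \<Delta>/4)"
      using u0 w0 by (simp add: field_simps)
    also have "\<dots> \<ge> 0" using key assms(1) by simp
    finally show "\<exists>d. DERIV G y :> d \<and> d \<ge> 0" using D by blast
  qed
  moreover have "G 1 = a*ln(1-\<rho>) - r*ln(2-\<rho>)"
  proof -
    have "1+\<rho>^2-2*\<rho>*1 = (1-\<rho>)^2" by (simp add: power2_eq_square algebra_simps)
    moreover have "4+\<rho>^2-4*\<rho>*1 = (2-\<rho>)^2" by (simp add: power2_eq_square algebra_simps)
    ultimately show ?thesis unfolding G_def using assms by (simp add: ln_realpow)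
  qed
  ultimately show ?thesis unfolding G_def by simp
qed


lemma cos_lb: assumes "(0::real) \<le> v" shows "cos v \<ge> 1 - v^2/2"
proof -
  let ?f = "\<lambda>x::real. cos x - 1 + x^2/2"
  have "?f 0 \<le> ?f v"
  proof (rule DERIV_nonneg_imp_nondecreasing[OF assms])
    fix x :: real assume "0 \<le> x" "x \<le> v"
    have "DERIV ?f x :> (- sin x + x)" by (auto intro!: derivative_eq_intros)
    moreover have "- sin x + x \<ge> 0" using sin_x_le_x[OF \<open>0 \<le> x\<close>] by simp
    ultimately show "\<exists>y. DERIV ?f x :> y \<and> y \<ge> 0" by blast
  qed
  thus ?thesis by simp
qed

lemma sin_lb: assumes "(0::real) \<le> v" shows "sin v \<ge> v - v^3/6"
proof -
  let ?f = "\<lambda>x::real. sin x - x + x^3/6"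
  have "?f 0 \<le> ?f v"
  proof (rule DERIV_nonneg_imp_nondecreasing[OF assms])
    fix x :: real assume "0 \<le> x" "x \<le> v"
    have "DERIV ?f x :> (cos x - 1 + x^2/2)" by (auto intro!: derivative_eq_intros)
    moreover have "cos x - 1 + x^2/2 \<ge> 0" using cos_lb[OF \<open>0 \<le> x\<close>] by simp
    ultimately show "\<exists>y. DERIV ?f x :> y \<and> y \<ge> 0" by blast
  qed
  thus ?thesis by simp
qed

lemma one_plus_cos_lb:
  assumes "0 \<le> t" "t \<le> (1::real)"
  shows "1 + cos (2*pi*t) \<ge> 2 * (t - 1/2)^2"
proof -
  define u where "u = pi*(t-1/2)"
  have "2*pi*t = 2*u + pi" unfolding u_def by (simp add: algebra_simps)
  hence "cos (2*pi*t) = - cos (2*u)" by simp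
  hence e: "1 + cos (2*pi*t) = 2 * sin u ^ 2" by (simp add: cos_double_sin)
  define v where "v = \<bar>u\<bar>"
  have sv: "sin u ^ 2 = sin v ^ 2" unfolding v_def by (cases "u \<ge> 0") auto
  have v0: "v \<ge> 0" unfolding v_def by simp
  have "\<bar>t - 1/2\<bar> \<le> 1/2" unfolding abs_le_iff using assms by simp
  hence "v \<le> pi * (1/2)" unfolding v_def u_def by (simp add: abs_mult mult_left_mono)
  hence v2: "v \<le> 2" using pi_less_4 by linarith
  have "v^2 \<le> 2^2" using v2 v0 by (intro power_mono) auto
  hence "v * v^2 \<le> v * 4" using v0 by (intro mult_left_mono) auto
  hence "v^3 \<le> 4 * v" by (simp add: power3_eq_cube power2_eq_square mult.commute)
  hence "sin v \<ge> v / 3" using sin_lb[OF v0] by simp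
  hence "sin v ^ 2 \<ge> (v/3)^2" using v0 by (intro power_mono) auto
  hence "1 + cos (2*pi*t) \<ge> 2 * (v/3)^2" using e sv by simp
  moreover have "v^2 = pi^2 * (t-1/2)^2" unfolding v_def u_def by (simp add: power_mult_distrib)
  moreover have "pi^2 \<ge> 9" using pi_gt3 power_mono[of 3 pi 2] by simp
  ultimately have h1: "1 + cos (2*pi*t) \<ge> 2/9 * (pi^2 * (t-1/2)^2)" and h2: "pi^2 \<ge> 9"
    by (simp_all add: power_divide)
  have "9*(t-1/2)^2 \<le> pi^2*(t-1/2)^2" using h2 by (intro mult_right_mono) auto
  hence "1 + cos (2*pi*t) \<ge> 2/9 * 9 * (t-1/2)^2" using h1 by linarith
  thus ?thesis by simp
qed

lemma aux_q: "(A::real) > 0 \<Longrightarrow> k > 0 \<Longrightarrow> (inverse A * (0 * y + (1 - 0) * k) * k - c * 0) / (k * k) = 1 / A"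
  by (simp add: field_simps)

lemma arctan_deriv: "k > 0 \<Longrightarrow> ((\<lambda>t. arctan (k*(t-1/2)) / k) has_real_derivative 1 / (1 + (k*(x-1/2))^2)) (at x within {0..1})"
  apply (rule derivative_eq_intros refl)+
  subgoal by simp
  apply (rule aux_q)
  apply (simp add: add_pos_nonneg)
  apply simp
  done

lemma arctan_integral:
  assumes "B > (0::real)"
  shows "((\<lambda>t. 1 / (1 + 2*B*(t-1/2)^2)) has_integral
           (arctan (sqrt (2*B) / 2) - arctan (- sqrt (2*B) / 2)) / sqrt (2*B)) {0..1}"
proof -
  define k where "k = sqrt (2*B)"
  have k0: "k > 0" unfolding k_def using assms by simp
  have kk: "k^2 = 2*B" unfolding k_def using assms by simp
  have "((\<lambda>t. 1 / (1 + 2*B*(t-1/2)^2)) has_integral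
           ((\<lambda>t. arctan (k*(t-1/2)) / k) 1 - (\<lambda>t. arctan (k*(t-1/2)) / k) 0)) {0..1}"
  proof (rule fundamental_theorem_of_calculus)
    show "0 \<le> (1::real)" by simp
    fix x :: real assume "x \<in> {0..1}"
    have "((\<lambda>t. arctan (k*(t-1/2)) / k) has_real_derivative
           (1 / (1 + (k*(x-1/2))^2))) (at x within {0..1})"
      by (rule arctan_deriv[OF k0])
    moreover have "(1 / (1 + (k*(x-1/2))^2)) = 1 / (1 + 2*B*(x-1/2)^2)"
      using k0 kk by (simp add: power_mult_distrib)
    ultimately show "((\<lambda>t. arctan (k*(t-1/2)) / k) has_vector_derivative
           (1 / (1 + 2*B*(x-1/2)^2))) (at x within {0..1})"
      by (simp add: has_real_derivative_iff_has_vector_derivative)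
  qed
  thus ?thesis unfolding k_def by (simp add: diff_divide_distrib)
qed


lemma circ_int_bound:
  assumes "f contour_integrable_on circlepath z \<rho>" "\<rho> > 0"
    "\<And>t. t \<in> {0..1} \<Longrightarrow> norm (f (circlepath z \<rho> t)) \<le> g t" "(g has_integral I) {0..1}"
  shows "norm (contour_integral (circlepath z \<rho>) f) \<le> 2*pi*\<rho>*I"
proof -
  let ?h = "\<lambda>t. f (circlepath z \<rho> t) * vector_derivative (circlepath z \<rho>) (at t within {0..1})"
  have hi: "(?h has_integral contour_integral (circlepath z \<rho>) f) {0..1}"
    using has_contour_integral_integral[OF assms(1)] unfolding has_contour_integral_def .
  have gi: "((\<lambda>t. 2*pi*\<rho> * g t) has_integral (2*pi*\<rho>) * I) {0..1}"
    using has_integral_mult_right[OF assms(4)] by simp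
  have "norm (integral {0..1} ?h) \<le> integral {0..1} (\<lambda>t. 2*pi*\<rho> * g t)"
  proof (rule integral_norm_bound_integral)
    show "?h integrable_on {0..1}" using hi by blast
    show "(\<lambda>t. 2*pi*\<rho> * g t) integrable_on {0..1}" using gi by blast
    fix t :: real assume t: "t \<in> {0..1}"
    have "norm (?h t) = norm (f (circlepath z \<rho> t)) * (2*pi*\<rho>)"
      using t assms(2) by (simp add: vector_derivative_circlepath01 norm_mult)
    also have "\<dots> \<le> g t * (2*pi*\<rho>)" using assms(3)[OF t] assms(2) by (intro mult_right_mono) auto
    finally show "norm (?h t) \<le> 2*pi*\<rho> * g t" by (simp add: mult.commute)
  qed
  thus ?thesis using hi gi integral_unique[OF assms(4)] by (simp add: integral_unique)
qed

lemma fk_holo: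
  assumes "R \<le> 1"
  shows "fk m r x holomorphic_on (ball 1 R - {1})"
proof -
  have nz: "w \<noteq> 0" "1 - w \<noteq> 0" "1 + 1/w \<noteq> 0" if "w \<in> ball 1 R - {1}" for w :: complex
  proof -
    have d: "norm (1 - w) < 1" using that assms by (simp add: dist_norm)
    show "w \<noteq> 0" using d by auto
    show "1 - w \<noteq> 0" using that by auto
    show "1 + 1/w \<noteq> 0"
    proof
      assume "1 + 1/w = 0"
      hence "w = -1" using \<open>w \<noteq> 0\<close> by (simp add: field_simps add_eq_0_iff)
      thus False using d by simp
    qed
  qed
  show ?thesis unfolding fk_def
    by (intro holomorphic_intros) (use nz assms in auto)
qed

lemma fk_change:
  assumes "1/2 \<le> \<rho>" "\<rho> < 1"
  shows "fk m r x contour_integrable_on circlepath 1 \<rho>"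
    "contour_integral (circlepath 1 (1/2)) (fk m r x) = contour_integral (circlepath 1 \<rho>) (fk m r x)"
proof -
  define R where "R = (1+\<rho>)/2"
  have R1: "R \<le> 1" and Rr: "\<rho> < R" unfolding R_def using assms by auto
  have cb: "cball 1 \<rho> \<subseteq> ball 1 R" using Rr by auto
  note L = contour_integral_circlepath_eq[OF open_ball fk_holo[OF R1] _ assms(1) cb]
  show "fk m r x contour_integrable_on circlepath 1 \<rho>" using L by simp
  show "contour_integral (circlepath 1 (1/2)) (fk m r x) = contour_integral (circlepath 1 \<rho>) (fk m r x)"
    using L by simp
qed


lemma sq_aux: "(s::real)^2 + c^2 = 1 \<Longrightarrow> (k + \<rho>*c)^2 + (\<rho> * s)^2 = k^2 + \<rho>^2 + 2*k*\<rho>*c"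
proof -
  assume h: "s^2 + c^2 = 1"
  have "(k + \<rho>*c)^2 + (\<rho> * s)^2 = k^2 + 2*k*\<rho>*c + \<rho>^2*(s^2+c^2)"
    by (simp add: power2_eq_square algebra_simps)
  thus ?thesis using h by simp
qed

lemma exp3: "exp (X - Y - Z) = exp X * exp (- Y) * exp (- (Z::real))"
  by (simp add: exp_diff exp_minus divide_inverse)

lemma circ_norms:
  fixes \<rho> t :: real
  defines "\<gamma> \<equiv> circlepath 1 \<rho> t"
  shows "norm \<gamma> ^ 2 = 1 + \<rho>^2 + 2*\<rho>*cos(2*pi*t)"
    "norm (1 + \<gamma>) ^ 2 = 4 + \<rho>^2 + 4*\<rho>*cos(2*pi*t)"
    "norm (1 - \<gamma>) = \<bar>\<rho>\<bar>"
proof -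
  have e: "\<gamma> = 1 + \<rho> * cis (2*pi*t)" unfolding \<gamma>_def circlepath cis_conv_exp by (simp add: mult_ac)
  have "norm \<gamma> ^ 2 = (1 + \<rho>*cos(2*pi*t))^2 + (\<rho> * sin (2*pi*t))^2"
    unfolding e cmod_power2 by simp
  also have "\<dots> = 1^2 + \<rho>^2 + 2*1*\<rho>*cos(2*pi*t)"
    by (rule sq_aux) simp
  finally show "norm \<gamma> ^ 2 = 1 + \<rho>^2 + 2*\<rho>*cos(2*pi*t)" by simp
  have "norm (1+\<gamma>) ^ 2 = (2 + \<rho>*cos(2*pi*t))^2 + (\<rho> * sin (2*pi*t))^2"
    unfolding e cmod_power2 by simp
  also have "\<dots> = 2^2 + \<rho>^2 + 2*2*\<rho>*cos(2*pi*t)"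
    by (rule sq_aux) simp
  finally show "norm (1+\<gamma>) ^ 2 = 4 + \<rho>^2 + 4*\<rho>*cos(2*pi*t)" by simp
  show "norm (1 - \<gamma>) = \<bar>\<rho>\<bar>" unfolding e by (simp add: norm_mult)
qed

lemma pointwise_bound:
  fixes r x m :: int and \<rho> \<Delta> t :: real
  assumes "1/2 \<le> \<rho>" "\<rho> < 1" "r \<ge> 0" "\<Delta> = 2*r*(1-\<rho>)^2/(2-\<rho>)^2 - (r - x - 1)" "\<Delta> > 0"
    "0 \<le> t" "t \<le> 1"
  shows "norm (fk m r x (circlepath 1 \<rho> t)) \<le>
     ((1-\<rho>) powr (r-x-1) * (2-\<rho>) powr (-r) * \<rho> powr (-m)) * (1 / (1 + 2*(\<rho>*\<Delta>/4)*(t-1/2)^2))"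
proof -
  define \<gamma> where "\<gamma> = circlepath 1 \<rho> t"
  define a where "a = real_of_int (r - x - 1)"
  define B where "B = \<rho>*\<Delta>/4"
  define co where "co = cos(2*pi*t)"
  note N = circ_norms[of \<rho> t, folded \<gamma>_def co_def]
  have r0: "\<rho> > 0" using assms by simp
  have g1: "norm (1 - \<gamma>) = \<rho>" using N(3) r0 by simp
  have ng: "norm \<gamma> > 0"
  proof -
    have "norm \<gamma> \<ge> 1 - norm (1 - \<gamma>)" using norm_triangle_ineq2[of 1 "1-\<gamma>"] by simp
    thus ?thesis using g1 assms by linarith
  qed
  have ng1: "norm (1 + \<gamma>) > 0"
  proof -
    have "norm (1+\<gamma>) \<ge> 2 - norm (1 - \<gamma>)" using norm_triangle_ineq2[of 2 "1-\<gamma>"] by simp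
    thus ?thesis using g1 assms by linarith
  qed
  have nf: "norm (fk m r x \<gamma>) = norm \<gamma> powr a * norm (1 + \<gamma>) powr (- real_of_int r) * \<rho> powr (- real_of_int m)"
  proof -
    have "\<gamma> \<noteq> 1" using g1 r0 by auto
    moreover have "\<gamma> \<noteq> 0" "1 + \<gamma> \<noteq> 0" using ng ng1 by auto
    ultimately show ?thesis unfolding a_def using norm_fk[of \<gamma> m r x] g1 by simp
  qed
  have cr: "(a/2)*ln(1+\<rho>^2-2*\<rho>*(-co)) - (r/2)*ln(4+\<rho>^2-4*\<rho>*(-co)) \<le> a*ln(1-\<rho>) - r*ln(2-\<rho>) - (\<rho>*\<Delta>/4)*(1-(-co))"
    by (rule circ_real) (use assms in \<open>auto simp: a_def co_def\<close>)
  have "ln (norm \<gamma> ^ 2) = 2 * ln (norm \<gamma>)" using ng by (simp add: ln_realpow)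
  hence l1: "ln (norm \<gamma>) = (1/2) * ln (1+\<rho>^2+2*\<rho>*co)" using N(1) by simp
  have "ln (norm (1+\<gamma>) ^ 2) = 2 * ln (norm (1+\<gamma>))" using ng1 by (simp add: ln_realpow)
  hence l2: "ln (norm (1+\<gamma>)) = (1/2) * ln (4+\<rho>^2+4*\<rho>*co)" using N(2) by simp
  have p1: "norm \<gamma> powr a = exp (a * ln (norm \<gamma>))" using ng by (simp add: powr_def mult.commute)
  have p2: "norm (1+\<gamma>) powr (- real_of_int r) = exp (- r * ln (norm (1+\<gamma>)))" using ng1 by (simp add: powr_def mult.commute)
  have "norm \<gamma> powr a * norm (1 + \<gamma>) powr (- real_of_int r) = exp (a * ln (norm \<gamma>) - r * ln (norm (1+\<gamma>)))"
    unfolding p1 p2 by (simp add: exp_diff exp_minus divide_inverse)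
  also have "\<dots> \<le> exp (a*ln(1-\<rho>) - r*ln(2-\<rho>) - B*(1+co))"
    using cr unfolding l1 l2 B_def by simp
  also have "\<dots> = (1-\<rho>) powr a * (2-\<rho>) powr (- real_of_int r) * exp (- (B*(1+co)))"
  proof -
    have q1: "(1-\<rho>) powr a = exp (a * ln (1-\<rho>))" using assms by (simp add: powr_def mult.commute)
    have q2: "(2-\<rho>) powr (- real_of_int r) = exp (- r * ln (2-\<rho>))" using assms by (simp add: powr_def mult.commute)
    show ?thesis unfolding q1 q2 using exp3[of "a * ln (1-\<rho>)" "r * ln (2-\<rho>)" "B*(1+co)"] by simp
  qed
  also have "\<dots> \<le> (1-\<rho>) powr a * (2-\<rho>) powr (- real_of_int r) * (1 / (1 + 2*B*(t-1/2)^2))"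
  proof (rule mult_left_mono)
    have B0: "B \<ge> 0" unfolding B_def using assms by simp
    have c1: "1 + co \<ge> 2*(t-1/2)^2" unfolding co_def using one_plus_cos_lb assms by simp
    have e1: "exp (B*(1+co)) \<ge> 1 + B*(1+co)" by (rule exp_ge_add_one_self)
    have e2: "B*(1+co) \<ge> B*(2*(t-1/2)^2)" using B0 c1 by (intro mult_left_mono) auto
    have "exp (B*(1+co)) \<ge> 1 + 2*B*(t-1/2)^2" using e1 e2 by (simp only: mult.assoc)
    moreover have "1 + 2*B*(t-1/2)^2 > 0" using B0 by (simp add: add_pos_nonneg)
    ultimately show "exp (- (B*(1+co))) \<le> 1 / (1 + 2*B*(t-1/2)^2)"
      by (simp add: exp_minus divide_simps)
    show "(1-\<rho>) powr a * (2-\<rho>) powr (- real_of_int r) \<ge> 0" by simp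
  qed
  finally have "norm \<gamma> powr a * norm (1 + \<gamma>) powr (- real_of_int r) \<le>
     (1-\<rho>) powr a * (2-\<rho>) powr (- real_of_int r) * (1 / (1 + 2*B*(t-1/2)^2))" .
  hence "norm (fk m r x \<gamma>) \<le> (1-\<rho>) powr a * (2-\<rho>) powr (- real_of_int r) * (1 / (1 + 2*B*(t-1/2)^2)) * \<rho> powr (- real_of_int m)"
    unfolding nf by (intro mult_right_mono) auto
  thus ?thesis unfolding \<gamma>_def a_def B_def by (simp add: mult_ac)
qed


lemma pker_bound:
  fixes n :: nat and r x :: int and \<rho> \<Delta> :: real
  assumes "1/2 \<le> \<rho>" "\<rho> < 1" "r \<ge> 0" "\<Delta> = 2*r*(1-\<rho>)^2/(2-\<rho>)^2 - (r - x - 1)" "\<Delta> > 0"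
  shows "norm (pker n r x) \<le> \<rho> * ((1-\<rho>) powr (r-x-1) * (2-\<rho>) powr (-r) * \<rho> powr (-(int n - r)))
            * (pi / sqrt (2*(\<rho>*\<Delta>/4)))"
proof -
  define m where "m = int n - r"
  define K where "K = (1-\<rho>) powr (r-x-1) * (2-\<rho>) powr (-r) * \<rho> powr (-m)"
  define B where "B = \<rho>*\<Delta>/4"
  define k where "k = sqrt (2*B)"
  define I0 where "I0 = (arctan (k / 2) - arctan (- k / 2)) / k"
  have B0: "B > 0" unfolding B_def using assms by simp
  have k0: "k > 0" unfolding k_def using B0 by simp
  have K0: "K \<ge> 0" unfolding K_def by simp
  have fe: "(\<lambda>z. (1 / z) * (1 / (z powi x * (1 - z) powi (int n - r) * (1 + 1 / z) powi r))) = fk m r x"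
    by (rule ext) (simp add: fk_def m_def)
  have pk: "pker n r x = - (1 / (2 * of_real pi * \<i>)) * contour_integral (circlepath 1 \<rho>) (fk m r x)"
    unfolding pker_def fe using fk_change(2)[OF assms(1,2)] by simp
  have ai: "((\<lambda>t. 1 / (1 + 2*B*(t-1/2)^2)) has_integral I0) {0..1}"
    unfolding I0_def k_def using arctan_integral[OF B0] by simp
  have ci: "norm (contour_integral (circlepath 1 \<rho>) (fk m r x)) \<le> 2*pi*\<rho>*(K*I0)"
  proof (rule circ_int_bound[OF fk_change(1)[OF assms(1,2)]])
    show "\<rho> > 0" using assms by simp
    show "((\<lambda>t. K * (1 / (1 + 2*B*(t-1/2)^2))) has_integral K*I0) {0..1}"
      using has_integral_mult_right[OF ai] by simp
    fix t :: real assume "t \<in> {0..1}"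
    thus "norm (fk m r x (circlepath 1 \<rho> t)) \<le> K * (1 / (1 + 2*B*(t-1/2)^2))"
      unfolding K_def B_def using pointwise_bound[OF assms, of t m] by simp
  qed
  have I0b: "I0 \<le> pi / k"
  proof -
    have "arctan (k/2) - arctan (-k/2) \<le> pi"
      using arctan_ubound[of "k/2"] arctan_lbound[of "-k/2"] by simp
    thus ?thesis unfolding I0_def using k0 by (simp add: divide_right_mono)
  qed
  have "norm (pker n r x) = norm (contour_integral (circlepath 1 \<rho>) (fk m r x)) / (2*pi)"
    unfolding pk by (simp add: norm_mult norm_divide)
  also have "\<dots> \<le> (2*pi*\<rho>*(K*I0)) / (2*pi)" using ci by (intro divide_right_mono) auto
  also have "\<dots> = \<rho>*K*I0" by simp
  also have "\<dots> \<le> \<rho>*K*(pi/k)" using I0b K0 assms by (intro mult_left_mono) auto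
  finally show ?thesis unfolding K_def k_def B_def m_def by simp
qed


lemma sqrt2_bounds: "1.414 \<le> sqrt (2::real)" "sqrt (2::real) \<le> 1.4143"
proof -
  show "1.414 \<le> sqrt (2::real)" by (rule real_le_rsqrt) (simp add: power2_eq_square)
  have "sqrt (2::real) \<le> sqrt (1.4143^2)" by (subst real_sqrt_le_iff) (simp add: power2_eq_square)
  thus "sqrt (2::real) \<le> 1.4143" by simp
qed

lemma deriv_Phi:
  assumes "0 < z" "z < (1::real)"
  shows "DERIV (\<lambda>z. c*ln z - r*ln(1+z) - d*ln(1-z)) z :> c/z - r/(1+z) + d/(1-z)"
proof -
  have l0: "DERIV ln z :> inverse z" by (rule DERIV_ln[OF assms(1)])
  have d1: "DERIV (\<lambda>z. 1+z) z :> 1" by (auto intro!: derivative_eq_intros)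
  have d2: "DERIV (\<lambda>z. 1-z) z :> -1" by (auto intro!: derivative_eq_intros)
  have l1: "DERIV (\<lambda>z. ln(1+z)) z :> inverse (1+z) * 1"
    using DERIV_chain2[OF DERIV_ln d1] assms by simp
  have l2: "DERIV (\<lambda>z. ln(1-z)) z :> inverse (1-z) * (-1)"
    using DERIV_chain2[OF DERIV_ln d2] assms by simp
  have D: "DERIV (\<lambda>z. c*ln z - r*ln(1+z) - d*ln(1-z)) z :> c * inverse z - r * (inverse (1+z) * 1) - d * (inverse (1-z) * (-1))"
    by (rule DERIV_diff[OF DERIV_diff[OF DERIV_cmult[OF l0] DERIV_cmult[OF l1]] DERIV_cmult[OF l2]])
  have eq: "c * inverse z - r * (inverse (1+z) * 1) - d * (inverse (1-z) * (-1)) = c/z - r/(1+z) + d/(1-z)"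
    by (simp add: divide_inverse)
  from D eq show ?thesis by (rule DERIV_cong)
qed

lemma ident1: "(r - n*w/2)*(1-z^2) - r*z*(1-z) + (n-r)*z*(1+z) - (n*(1/2+w/4)*(z-(w-1))^2 - (r - n*(1/2+w/4))*(z-(w-1))*(z+1+w)) = ((w::real)^2-2)*(n/2 + z*n/2 - r)"
  by (simp add: field_simps power2_eq_square power3_eq_cube)

lemma ident2: "2*(1/2+w/4)*z^2 - (1/2-w/4)*(1+z)^2 - (z - (w-1))*(1 + (2*(1/2+w/4) - (1/2-w/4))*(z - (w-1))) = ((w::real)^2-2)*((3/2)*z + 1 - 3*w/4)"
  by (simp add: field_simps power2_eq_square power3_eq_cube)

lemma frac3: "(\<xi>::real) \<noteq> 0 \<Longrightarrow> 1 - \<xi> \<noteq> 0 \<Longrightarrow> 1 + \<xi> \<noteq> 0 \<Longrightarrow> c/\<xi> - r/(1+\<xi>) + (n-r)/(1-\<xi>) = (c*((1-\<xi>)*(1+\<xi>)) - r*\<xi>*(1-\<xi>) + (n-r)*\<xi>*(1+\<xi>)) / (\<xi>*((1-\<xi>)*(1+\<xi>)))"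
  by (simp add: add_divide_distrib diff_divide_distrib)

lemma F_bound:
  fixes n r x s :: real
  assumes n0: "n \<ge> 0" and s0: "0 < s" and s1: "s \<le> 0.08"
  shows "(r-x-1)*ln(sqrt 2 - 1 + s) - r*ln(sqrt 2 + s) - (n-r)*ln(2 - sqrt 2 - s)
    \<le> (r-x-1)*ln(sqrt 2 - 1) - r*ln(sqrt 2) - (n-r)*ln(2 - sqrt 2)
      + s*(n*(1/2 + sqrt 2/4) * s^2 + 3*\<bar>r - n*(1/2 + sqrt 2/4)\<bar> * s)/0.3
      - (x - n * sqrt 2/2 + 1)*ln((sqrt 2 - 1 + s)/(sqrt 2 - 1))"
proof -
  define w where "w = sqrt (2::real)"
  have w2: "w^2 = 2" unfolding w_def by simp
  have wl: "1.414 \<le> w" and wu: "w \<le> 1.4143" unfolding w_def using sqrt2_bounds by auto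
  define zc where "zc = w - 1"
  define z1 where "z1 = zc + s"
  define \<alpha> where "\<alpha> = 1/2 + w/4"
  define c where "c = r - n*w/2"
  define D where "D = x - n*w/2 + 1"
  define \<Phi> where "\<Phi> = (\<lambda>z. c*ln z - r*ln(1+z) - (n-r)*ln(1-z))"
  define \<Phi>' where "\<Phi>' = (\<lambda>z::real. c/z - r/(1+z) + (n-r)/(1-z))"
  have zc0: "zc > 0" and zc1: "zc < 1" unfolding zc_def using wl wu by auto
  have "zc < z1" unfolding z1_def using s0 by simp
  then obtain \<xi> where \<xi>: "zc < \<xi>" "\<xi> < z1" and mvt: "\<Phi> z1 - \<Phi> zc = (z1 - zc) * \<Phi>' \<xi>"
  proof -
    have "DERIV \<Phi> y :> \<Phi>' y" if y: "zc \<le> y \<and> y \<le> z1" for y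
    proof -
      have "0 < y" "y < 1" using y zc0 s1 wu unfolding z1_def zc_def by auto
      thus "DERIV \<Phi> y :> \<Phi>' y" unfolding \<Phi>_def \<Phi>'_def by (rule deriv_Phi)
    qed
    from MVT2[OF \<open>zc < z1\<close>, of \<Phi> \<Phi>'] this show ?thesis using that by blast
  qed
  have \<xi>0: "\<xi> > 0" and \<xi>1: "\<xi> < 1" using \<xi> zc0 s1 wu unfolding z1_def zc_def by auto
  have xs: "0 \<le> \<xi> - zc" "\<xi> - zc \<le> s" using \<xi> unfolding z1_def by auto
  have \<xi>ub: "\<xi> \<le> 0.4943" using \<xi> s1 wu unfolding z1_def zc_def by auto
  have \<xi>lb: "\<xi> \<ge> 0.414" using \<xi> wl unfolding zc_def by auto
  define num where "num = c*(1-\<xi>^2) - r*\<xi>*(1-\<xi>) + (n-r)*\<xi>*(1+\<xi>)"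
  have den: "\<xi>*(1-\<xi>^2) \<ge> 0.3"
  proof -
    have "\<xi>^2 \<le> 0.4943^2" using \<xi>0 \<xi>ub by (intro power_mono) auto
    hence "1 - \<xi>^2 \<ge> 0.75" by (simp add: power2_eq_square)
    hence "\<xi>*(1-\<xi>^2) \<ge> 0.414 * 0.75" using \<xi>lb by (intro mult_mono) auto
    thus ?thesis by simp
  qed
  have \<Phi>'e: "\<Phi>' \<xi> = num / (\<xi>*(1-\<xi>^2))"
  proof -
    have "1 + \<xi> \<noteq> 0" "1 - \<xi> \<noteq> 0" "\<xi> \<noteq> 0" using \<xi>0 \<xi>1 by auto
    moreover have e: "1-\<xi>^2 = (1-\<xi>)*(1+\<xi>)" by (simp add: power2_eq_square algebra_simps)
    ultimately show ?thesis unfolding \<Phi>'_def num_def e by (intro frac3) auto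
  qed
  have nume: "num = n*\<alpha>*(\<xi>-zc)^2 - (r - n*\<alpha>)*(\<xi>-zc)*(\<xi>+1+w)"
    using ident1[of r n w \<xi>] w2 unfolding num_def c_def \<alpha>_def zc_def by simp
  have numb: "num \<le> n*\<alpha> * s^2 + 3*\<bar>r - n*\<alpha>\<bar> * s"
  proof -
    have a0: "n*\<alpha> \<ge> 0" unfolding \<alpha>_def using n0 wl by simp
    have "(\<xi>-zc)^2 \<le> s^2" using xs by (intro power_mono) auto
    hence t1: "n*\<alpha>*(\<xi>-zc)^2 \<le> n*\<alpha> * s^2" using a0 by (intro mult_left_mono) auto
    have p0: "(\<xi>-zc)*(\<xi>+1+w) \<ge> 0" using xs \<xi>0 wl by simp
    have p1: "(\<xi>-zc)*(\<xi>+1+w) \<le> s*3" using xs \<xi>ub wu \<xi>0 wl by (intro mult_mono) auto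
    have "- (r - n*\<alpha>)*((\<xi>-zc)*(\<xi>+1+w)) \<le> \<bar>r - n*\<alpha>\<bar>*((\<xi>-zc)*(\<xi>+1+w))"
      using p0 by (intro mult_right_mono) auto
    also have "\<dots> \<le> \<bar>r - n*\<alpha>\<bar>*(s*3)" using p1 by (intro mult_left_mono) auto
    finally have t2: "- (r - n*\<alpha>)*((\<xi>-zc)*(\<xi>+1+w)) \<le> \<bar>r - n*\<alpha>\<bar>*(s*3)" .
    have "num = n*\<alpha>*(\<xi>-zc)^2 + (- (r - n*\<alpha>))*((\<xi>-zc)*(\<xi>+1+w))"
      unfolding nume by (simp add: algebra_simps)
    thus ?thesis using t1 t2 by (simp add: mult_ac)
  qed
  have M0: "n*\<alpha> * s^2 + 3*\<bar>r - n*\<alpha>\<bar> * s \<ge> 0" unfolding \<alpha>_def using n0 s0 wl by simp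
  have "\<Phi>' \<xi> \<le> (n*\<alpha> * s^2 + 3*\<bar>r - n*\<alpha>\<bar> * s) / (\<xi>*(1-\<xi>^2))"
    unfolding \<Phi>'e using den numb by (intro divide_right_mono) auto
  also have "\<dots> \<le> (n*\<alpha> * s^2 + 3*\<bar>r - n*\<alpha>\<bar> * s) / 0.3"
    using den M0 by (intro divide_left_mono) auto
  finally have pb: "\<Phi>' \<xi> \<le> (n*\<alpha> * s^2 + 3*\<bar>r - n*\<alpha>\<bar> * s) / 0.3" .
  have "\<Phi> z1 - \<Phi> zc = s * \<Phi>' \<xi>" using mvt unfolding z1_def by simp
  also have "\<dots> \<le> s * ((n*\<alpha> * s^2 + 3*\<bar>r - n*\<alpha>\<bar> * s) / 0.3)"
    using pb s0 by (intro mult_left_mono) auto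
  finally have "\<Phi> z1 - \<Phi> zc \<le> s * ((n*\<alpha> * s^2 + 3*\<bar>r - n*\<alpha>\<bar> * s) / 0.3)" .
  note Pb = this
  have lnd: "ln (z1/zc) = ln z1 - ln zc" using zc0 s0 unfolding z1_def by (simp add: ln_div)
  define F where "F = (\<lambda>z. (r-x-1)*ln z - r*ln(1+z) - (n-r)*ln(1-z))"
  have key: "F z1 - F zc = (\<Phi> z1 - \<Phi> zc) - D*ln(z1/zc)"
    unfolding lnd F_def \<Phi>_def c_def D_def by (simp add: field_simps)
  have fin: "F z1 \<le> F zc + s * ((n*\<alpha> * s^2 + 3*\<bar>r - n*\<alpha>\<bar> * s) / 0.3) - D*ln(z1/zc)"
    using key Pb by linarith
  have f1: "F z1 = (r-x-1)*ln(sqrt 2 - 1 + s) - r*ln(sqrt 2 + s) - (n-r)*ln(2 - sqrt 2 - s)"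
    unfolding F_def z1_def zc_def w_def by (simp add: algebra_simps)
  have f0: "F zc = (r-x-1)*ln(sqrt 2 - 1) - r*ln(sqrt 2) - (n-r)*ln(2 - sqrt 2)"
    unfolding F_def zc_def w_def by (simp add: algebra_simps)
  show ?thesis using fin unfolding f1 f0 unfolding D_def \<alpha>_def z1_def zc_def w_def
    by (simp add: algebra_simps)
qed


lemma L_Delta:
  fixes n r x s q T Z \<sigma> :: real
  assumes q1: "q \<ge> 1" and nq: "n = q^3" and sd: "s = \<sigma>/q" and sg: "\<sigma> = 2*T+2" and T0: "T \<ge> 0" and Z0: "Z \<ge> 0"
    and qZ: "q \<ge> 3*Z+5" and s0: "0 < s" and s1: "s \<le> 0.08"
    and dr: "\<bar>r - n*(1/2+sqrt 2/4)\<bar> \<le> T*q^2 + 1"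
    and Dl: "x - n * sqrt 2/2 + 1 + Z*q + 1 \<ge> 0"
  shows "2*r*(sqrt 2 - 1 + s)^2/(sqrt 2 + s)^2 - (r - x - 1) \<ge> q^2/3"
proof -
  define w where "w = sqrt (2::real)"
  have w2: "w^2 = 2" unfolding w_def by simp
  have wl: "1.414 \<le> w" and wu: "w \<le> 1.4143" unfolding w_def using sqrt2_bounds by auto
  define z1 where "z1 = w - 1 + s"
  define \<alpha> where "\<alpha> = 1/2 + w/4"
  define A where "A = 1/2 - w/4"
  define dr where "dr = r - n*\<alpha>"
  define D where "D = x - n*w/2 + 1"
  define zq where "zq = Z*q"
  have zq0: "zq \<ge> 0" unfolding zq_def using Z0 q1 by simp
  have z1l: "z1 \<ge> 0.414" and z1u: "z1 \<le> 0.5" unfolding z1_def using wl wu s0 s1 by auto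
  have Nm: "2*r*z1^2 - (r-x-1)*(1+z1)^2 = n*(2*\<alpha>*z1^2 - A*(1+z1)^2) + dr*(2*z1^2 - (1+z1)^2) + D*(1+z1)^2"
    unfolding dr_def D_def \<alpha>_def A_def by (simp add: algebra_simps)
  have i2: "2*\<alpha>*z1^2 - A*(1+z1)^2 = s*(1 + (1/2+3*w/4) * s)"
    using ident2[of w z1] w2 unfolding \<alpha>_def A_def z1_def by (simp add: algebra_simps)
  have "s*(1 + (1/2+3*w/4) * s) \<ge> s" using s0 wl by simp
  hence t1: "n*(2*\<alpha>*z1^2 - A*(1+z1)^2) \<ge> n * s" unfolding i2 using nq q1 by (intro mult_left_mono) auto
  have ns: "n * s = \<sigma>*q^2" unfolding nq sd using q1 by (simp add: power2_eq_square power3_eq_cube)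
  have bb: "\<bar>2*z1^2 - (1+z1)^2\<bar> \<le> 2"
  proof -
    have e: "2*z1^2 - (1+z1)^2 = z1^2 - 2*z1 - 1" by (simp add: power2_eq_square algebra_simps)
    have "z1^2 \<le> 1" using z1l z1u by (simp add: power_le_one)
    moreover have "(z1-1)^2 \<ge> 0" by simp
    moreover have "(z1-1)^2 = z1^2 - 2*z1 + 1" by (simp add: power2_eq_square algebra_simps)
    moreover have "z1 \<ge> 0" using z1l by simp
    ultimately show ?thesis unfolding e abs_le_iff by linarith
  qed
  have t2: "dr*(2*z1^2 - (1+z1)^2) \<ge> -(2*(T*q^2+1))"
  proof -
    have "\<bar>dr*(2*z1^2 - (1+z1)^2)\<bar> \<le> (T*q^2+1)*2"
      unfolding abs_mult using dr bb unfolding dr_def \<alpha>_def w_def by (intro mult_mono) auto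
    thus ?thesis by linarith
  qed
  have t3: "D*(1+z1)^2 + 3*zq + 3 \<ge> 0"
  proof (cases "D \<ge> 0")
    case True
    have "D*(1+z1)^2 \<ge> 0" using True by simp
    thus ?thesis using zq0 by linarith
  next
    case False
    have "(1+z1)^2 \<le> (3/2)^2" using z1l z1u by (intro power_mono) auto
    hence "(1+z1)^2 \<le> 3" by (simp add: power2_eq_square)
    hence a1: "D*(1+z1)^2 \<ge> D*3" using False by (intro mult_left_mono_neg) auto
    have "D + zq + 1 \<ge> 0" using Dl unfolding D_def w_def zq_def by linarith
    thus ?thesis using a1 by linarith
  qed
  have c1: "2*r*z1^2 - (r-x-1)*(1+z1)^2 \<ge> \<sigma>*q^2 - 2*(T*q^2+1) - 3*zq - 3"
    unfolding Nm using t1 t2 t3 ns by linarith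
  have c2: "\<sigma>*q^2 - 2*(T*q^2+1) - 3*zq - 3 = 2*q^2 - 3*zq - 5"
    unfolding sg by (simp add: algebra_simps)
  have c3: "2*q^2 - 3*zq - 5 \<ge> q^2"
  proof -
    have "q*q \<ge> q*(3*Z+5)" using qZ q1 by (intro mult_left_mono) auto
    hence "q*q \<ge> 3*zq + 5*q" unfolding zq_def by (simp add: algebra_simps)
    thus ?thesis using q1 zq0 by (simp add: power2_eq_square)
  qed
  have N1: "2*r*z1^2 - (r-x-1)*(1+z1)^2 \<ge> q^2" using c1 c2 c3 by linarith
  have p: "(1+z1)^2 > 0" using z1l by simp
  have "(1+z1)^2 \<le> (3/2)^2" using z1l z1u by (intro power_mono) auto
  hence p2: "(1+z1)^2 \<le> 3" by (simp add: power2_eq_square)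
  have d1: "2*r*z1^2/(1+z1)^2 - (r-x-1) = (2*r*z1^2 - (r-x-1)*(1+z1)^2)/(1+z1)^2"
    using p by (simp add: field_simps)
  have d2: "(2*r*z1^2 - (r-x-1)*(1+z1)^2)/(1+z1)^2 \<ge> q^2/(1+z1)^2" using N1 p by (intro divide_right_mono) auto
  have d3: "q^2/(1+z1)^2 \<ge> q^2/3" using p p2 by (intro divide_left_mono) auto
  have "2*r*z1^2/(1+z1)^2 - (r-x-1) \<ge> q^2/3" using d1 d2 d3 by linarith
  moreover have "1 + z1 = sqrt 2 + s" unfolding z1_def w_def by simp
  ultimately show ?thesis unfolding z1_def w_def by simp
qed

lemma L_S:
  fixes n r x s q T Z \<sigma> e c5 Y :: real
  assumes q1: "q \<ge> 1" and nq: "n = q^3" and sd: "s = \<sigma>/q" and sg: "\<sigma> = 2*T+2" and T0: "T \<ge> 0" and Z0: "Z \<ge> 0"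
    and s0: "0 < s" and s1: "s \<le> 0.08"
    and dr: "\<bar>r - n*(1/2+sqrt 2/4)\<bar> \<le> T*q^2 + 1"
    and DY: "x - n * sqrt 2/2 + 1 \<ge> c5*Y*q - 1"
    and DZ: "x - n * sqrt 2/2 + 1 + Z*q + 1 \<ge> 0"
    and E: "e + n - 2*r + x + 1 \<le> 3"
  shows "(n/2)*ln 2 + e*ln(sqrt 2+1) + ((r-x-1)*ln(sqrt 2 - 1 + s) - r*ln(sqrt 2 + s) - (n-r)*ln(2 - sqrt 2 - s))
     \<le> (6 + 4*(\<sigma>^3 + 3*(T+1)*\<sigma>^2) + 2*\<sigma> + \<sigma>*(Z+1)) - 2*c5*\<sigma>*Y"
proof -
  define w where "w = sqrt (2::real)"
  have w2: "w^2 = 2" unfolding w_def by simp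
  have wl: "1.414 \<le> w" and wu: "w \<le> 1.4143" unfolding w_def using sqrt2_bounds by auto
  define \<alpha> where "\<alpha> = 1/2 + w/4"
  define D where "D = x - n*w/2 + 1"
  define zc where "zc = w - 1"
  define z1 where "z1 = w - 1 + s"
  define L where "L = ln (z1/zc)"
  define K where "K = s*(n*\<alpha> * s^2 + 3*\<bar>r - n*\<alpha>\<bar> * s)/0.3"
  have n0: "n \<ge> 0" using nq q1 by simp
  have FB: "(r-x-1)*ln(sqrt 2 - 1 + s) - r*ln(sqrt 2 + s) - (n-r)*ln(2 - sqrt 2 - s)
    \<le> (r-x-1)*ln(sqrt 2 - 1) - r*ln(sqrt 2) - (n-r)*ln(2 - sqrt 2) + K - D*L"
    using F_bound[OF n0 s0 s1, of r x] unfolding K_def D_def L_def \<alpha>_def w_def z1_def zc_def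
    by (simp add: algebra_simps)
  define lam where "lam = ln (w+1)"
  have w1p: "w - 1 > 0" "2 - w > 0" using wl wu by auto
  have "w > 1" using wl by simp
  have l1: "ln (w - 1) = - lam"
  proof -
    have "(w-1)*(w+1) = 1" using w2 by (simp add: algebra_simps power2_eq_square)
    moreover have "ln ((w-1)*(w+1)) = ln (w-1) + ln (w+1)" using w1p \<open>w > 1\<close> by (intro ln_mult_pos) auto
    ultimately have "ln (w-1) + ln (w+1) = 0" by simp
    thus ?thesis unfolding lam_def by simp
  qed
  have l2: "ln w = ln 2 / 2" unfolding w_def by (simp add: ln_sqrt)
  have l3: "ln (2 - w) = ln 2 / 2 - lam"
  proof -
    have "(2-w)*(w+1) = w" using w2 by (simp add: algebra_simps power2_eq_square)
    moreover have "ln ((2-w)*(w+1)) = ln (2-w) + ln (w+1)" using w1p \<open>w > 1\<close> by (intro ln_mult_pos) auto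
    ultimately have "ln (2-w) + ln (w+1) = ln w" by simp
    thus ?thesis using l2 unfolding lam_def by simp
  qed
  have F0: "(n/2)*ln 2 + e*lam + ((r-x-1)*ln(w - 1) - r*ln w - (n-r)*ln(2 - w)) = (e + n - 2*r + x + 1)*lam"
    unfolding l1 l2 l3 by (simp add: field_simps)
  have lam0: "lam \<ge> 0" unfolding lam_def using wl by simp
  have lam2: "lam \<le> 2"
  proof -
    have "lam \<le> (w+1) - 1" unfolding lam_def by (rule ln_le_minus_one) (use wl in simp)
    thus ?thesis using wu by simp
  qed
  have T1: "(e + n - 2*r + x + 1)*lam \<le> 6"
  proof -
    have "(e + n - 2*r + x + 1)*lam \<le> 3*lam" using E lam0 by (intro mult_right_mono) auto
    thus ?thesis using lam2 by linarith
  qed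
  have T2: "K \<le> 4*(\<sigma>^3 + 3*(T+1)*\<sigma>^2)"
  proof -
    have q0: "q > 0" using q1 by simp
    have sig0: "\<sigma> \<ge> 0" using sg T0 by simp
    have a1: "\<alpha> \<le> 1" "\<alpha> \<ge> 0" unfolding \<alpha>_def using wu wl by auto
    have e1: "s*(n*\<alpha> * s^2) = \<alpha>*\<sigma>^3" unfolding sd nq using q0 by (simp add: power3_eq_cube power2_eq_square field_simps)
    have "\<alpha>*\<sigma>^3 \<le> 1*\<sigma>^3" using a1 sig0 by (intro mult_right_mono) auto
    hence b1: "s*(n*\<alpha> * s^2) \<le> \<sigma>^3" unfolding e1[symmetric] by simp
    have "\<bar>r - n*\<alpha>\<bar> * s^2 \<le> (T*q^2+1) * s^2" using dr unfolding \<alpha>_def w_def by (intro mult_right_mono) auto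
    also have "(T*q^2+1) * s^2 = (T + 1/q^2)*\<sigma>^2" unfolding sd using q0 by (simp add: field_simps power2_eq_square)
    also have "\<dots> \<le> (T+1)*\<sigma>^2"
    proof (intro mult_right_mono)
      have "1/q^2 \<le> 1" using q1 by (simp add: power_le_one_iff divide_le_eq_1 one_le_power)
      thus "T + 1/q^2 \<le> T + 1" by simp
    qed simp
    finally have b2: "\<bar>r - n*\<alpha>\<bar> * s^2 \<le> (T+1)*\<sigma>^2" .
    have "K = (s*(n*\<alpha> * s^2) + 3*(\<bar>r - n*\<alpha>\<bar> * s^2))/0.3" unfolding K_def by (simp add: algebra_simps power2_eq_square)
    also have "\<dots> \<le> (\<sigma>^3 + 3*((T+1)*\<sigma>^2))/0.3" using b1 b2 by (intro divide_right_mono) auto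
    also have "\<dots> \<le> 4*(\<sigma>^3 + 3*(T+1)*\<sigma>^2)"
    proof -
      define X where "X = \<sigma>^3 + 3*((T+1)*\<sigma>^2)"
      have "X \<ge> 0" unfolding X_def using sig0 T0 by simp
      hence "X/0.3 \<le> 4*X" by (simp add: divide_simps)
      moreover have "4*(\<sigma>^3 + 3*(T+1)*\<sigma>^2) = 4*X" unfolding X_def by (simp add: algebra_simps)
      ultimately show ?thesis unfolding X_def by linarith
    qed
    finally show ?thesis .
  qed
  have zc0: "zc > 0" and z10: "z1 > 0" unfolding zc_def z1_def using wl s0 by auto
  have Lu: "L \<le> s/zc"
  proof -
    have "L \<le> z1/zc - 1" unfolding L_def by (rule ln_le_minus_one) (use zc0 z10 in simp)
    also have "z1/zc - 1 = s/zc" unfolding z1_def zc_def using zc0 unfolding zc_def by (simp add: field_simps)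
    finally show ?thesis .
  qed
  have Ll: "L \<ge> s/z1"
  proof -
    have "ln (zc/z1) \<le> zc/z1 - 1" by (rule ln_le_minus_one) (use zc0 z10 in simp)
    moreover have "ln (zc/z1) = - L" unfolding L_def using zc0 z10 by (simp add: ln_div)
    moreover have "zc/z1 - 1 = - (s/z1)" unfolding z1_def zc_def using z10 unfolding z1_def by (simp add: field_simps)
    ultimately show ?thesis by simp
  qed
  have z1u: "z1 \<le> 1/2" unfolding z1_def using wu s1 by simp
  have zcl: "zc \<ge> 2/5" unfolding zc_def using wl by simp
  have sz1: "s/z1 \<ge> 2 * s" using z10 z1u s0 by (simp add: divide_simps)
  have szc: "s/zc \<le> (5/2) * s" using zc0 zcl s0 by (simp add: divide_simps)
  have T3: "- (D*L) \<le> -(2*D * s) + s*(Z*q+1)"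
  proof (cases "D \<ge> 0")
    case True
    have "D*L \<ge> D*(2 * s)" using True Ll sz1 by (intro mult_left_mono) auto
    moreover have "s*(Z*q+1) \<ge> 0" using s0 Z0 q1 by simp
    ultimately show ?thesis by (simp add: mult_ac)
  next
    case False
    have "L \<le> (5/2) * s" using Lu szc by linarith
    hence "(-D)*L \<le> (-D)*((5/2) * s)" using False by (intro mult_left_mono) auto
    moreover have "(-D) \<le> Z*q+1" using DZ unfolding D_def w_def by simp
    hence "(-D)*((1/2) * s) \<le> (Z*q+1)*((1/2) * s)" using s0 by (intro mult_right_mono) auto
    moreover have "(Z*q+1)*((1/2) * s) \<le> s*(Z*q+1)" using s0 Z0 q1 by (simp add: algebra_simps)
    ultimately show ?thesis by (simp add: algebra_simps)
  qed
  have T4: "-(2*D * s) \<le> 2*\<sigma> - 2*c5*\<sigma>*Y"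
  proof -
    have "D \<ge> c5*Y*q - 1" using DY unfolding D_def w_def by simp
    hence "D*(2 * s) \<ge> (c5*Y*q - 1)*(2 * s)" using s0 by (intro mult_right_mono) auto
    moreover have "(c5*Y*q - 1)*(2 * s) = 2*c5*\<sigma>*Y - 2 * s"
    proof -
      have qs: "q * s = \<sigma>" unfolding sd using q1 by simp
      have "(c5*Y*q - 1)*(2 * s) = 2*c5*Y*(q * s) - 2 * s" by (simp add: algebra_simps)
      thus ?thesis unfolding qs by (simp add: algebra_simps)
    qed
    moreover have "s \<le> \<sigma>" unfolding sd using q1 sg T0 divide_left_mono[of 1 q \<sigma>] by simp
    moreover have "2*D * s = D*(2 * s)" by simp
    ultimately show ?thesis by linarith
  qed
  have T5: "s*(Z*q+1) \<le> \<sigma>*(Z+1)"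
  proof -
    have qs: "q * s = \<sigma>" unfolding sd using q1 by simp
    have "s*(Z*q+1) = Z*(q * s) + s" by (simp add: algebra_simps)
    hence "s*(Z*q+1) = \<sigma>*Z + s" unfolding qs by simp
    moreover have "s \<le> \<sigma>" unfolding sd using q1 sg T0 divide_left_mono[of 1 q \<sigma>] by simp
    moreover have "\<sigma>*(Z+1) = \<sigma>*Z + \<sigma>" by (simp add: algebra_simps)
    ultimately show ?thesis by linarith
  qed
  have main: "(n/2)*ln 2 + e*lam + ((r-x-1)*ln(sqrt 2 - 1 + s) - r*ln(sqrt 2 + s) - (n-r)*ln(2 - sqrt 2 - s))
     \<le> (e + n - 2*r + x + 1)*lam + K - D*L"
    using FB F0 unfolding w_def by linarith
  show ?thesis using main T1 T2 T3 T4 T5 unfolding lam_def w_def by linarith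
qed


lemma q_facts:
  fixes n :: nat
  assumes "real n powr (1/3) \<ge> 1"
  shows "real n > 0" "(real n powr (1/3))^3 = real n" "(real n powr (1/3))^2 = real n powr (2/3)"
proof -
  show n0: "real n > 0" using assms by (cases "n = 0") auto
  have "(real n powr (1/3))^3 = (real n powr (1/3)) powr (real 3)"
    using n0 by (subst powr_realpow) auto
  also have "\<dots> = real n" using n0 by (simp add: powr_powr)
  finally show "(real n powr (1/3))^3 = real n" .
  have "(real n powr (1/3))^2 = (real n powr (1/3)) powr (real 2)"
    using n0 by (subst powr_realpow) auto
  also have "\<dots> = real n powr (2/3)" using n0 by (simp add: powr_powr)
  finally show "(real n powr (1/3))^2 = real n powr (2/3)" .
qed

lemma exp5: "exp a * exp b * (exp c * exp (-d) * exp (-f)) = exp (a + b + (c - d - (f::real)))"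
  by (simp add: mult_exp_exp)

lemma main_bound:
  fixes n :: nat and t y \<zeta> T Z \<sigma> :: real
  assumes tT: "\<bar>t\<bar> \<le> T" and T0: "T \<ge> 0" and Z0: "Z \<ge> 0" and YZ: "y + \<zeta> \<ge> -Z"
    and sg: "\<sigma> = 2*T+2" and Q: "real n powr (1/3) \<ge> 13*\<sigma> + 3*Z + 5"
  shows "norm (Psc n t y \<zeta>) \<le> (pi * sqrt 12 * exp(6 + 4*(\<sigma>^3 + 3*(T+1)*\<sigma>^2) + 2*\<sigma> + \<sigma>*(Z+1)))
            * exp(-(2*(2 powr (-5/6))*\<sigma>)*(y+\<zeta>))"
proof -
  define q where "q = real n powr (1/3)"
  have sig2: "\<sigma> \<ge> 2" using sg T0 by simp
  have q1: "q \<ge> 1" using Q sig2 Z0 unfolding q_def by linarith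
  note QF = q_facts[OF q1[unfolded q_def]]
  have n0: "real n > 0" using QF(1) .
  have nq: "real n = q^3" using QF(2) unfolding q_def by simp
  have q23: "real n powr (2/3) = q^2" using QF(3) unfolding q_def by simp
  have q0: "q > 0" using q1 by simp
  define w where "w = sqrt (2::real)"
  have w2: "w^2 = 2" unfolding w_def by simp
  have wl: "1.414 \<le> w" and wu: "w \<le> 1.4143" unfolding w_def using sqrt2_bounds by auto
  define s where "s = \<sigma>/q"
  have s0: "s > 0" unfolding s_def using sig2 q0 by simp
  have s1: "s \<le> 0.08"
  proof -
    have "13*\<sigma> \<le> q" using Q Z0 unfolding q_def by linarith
    hence "\<sigma>/q \<le> 1/13" using q0 by (simp add: divide_simps)
    thus ?thesis unfolding s_def by simp
  qed
  define \<rho> where "\<rho> = 2 - w - s"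
  have \<rho>1: "1/2 \<le> \<rho>" and \<rho>2: "\<rho> < 1" unfolding \<rho>_def using wl wu s0 s1 by auto
  define c5 where "c5 = (2::real) powr (-5/6)"
  define c7 where "c7 = (2::real) powr (-7/6)"
  define c6 where "c6 = (2::real) powr (-1/6)"
  have c5p: "0 < c5" "c5 \<le> 1" unfolding c5_def using powr_le_cancel_iff[of 2 "-5/6" 0] by auto
  have c7p: "0 < c7" "c7 \<le> 1" unfolding c7_def using powr_le_cancel_iff[of 2 "-7/6" 0] by auto
  have c67: "c6 = 2*c7"
  proof -
    have "(2::real) powr (1 + (-7/6)) = 2 powr 1 * 2 powr (-7/6)" by (rule powr_add)
    moreover have "(1::real) + (-7/6) = -1/6" by simp
    ultimately show ?thesis unfolding c6_def c7_def by simp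
  qed
  define \<alpha> where "\<alpha> = 1/2 + w/4"
  have aw: "1/2 + 1/(2 * sqrt 2) = \<alpha>" unfolding \<alpha>_def w_def
    by (simp add: field_simps)
  have nw: "real n / sqrt 2 = real n * w / 2" unfolding w_def
    by (simp add: field_simps)
  define r where "r = lsc n t"
  define j where "j = jsc n y"
  define v where "v = vsc n \<zeta>"
  define x where "x = v + j"
  have r_le: "real_of_int r \<le> real n*\<alpha> + c7*t*q^2" and r_gt: "real_of_int r > real n*\<alpha> + c7*t*q^2 - 1"
    unfolding r_def lsc_def aw q23[symmetric] c7_def by (simp_all add: mult_ac)
  have j_le: "real_of_int j \<le> c5*y*q" and j_gt: "real_of_int j > c5*y*q - 1"
    unfolding j_def jsc_def c5_def q_def by (simp_all add: mult_ac)
  have v_le: "real_of_int v \<le> real n*w/2 + c5*\<zeta>*q" and v_gt: "real_of_int v > real n*w/2 + c5*\<zeta>*q - 1"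
    unfolding v_def vsc_def c5_def q_def nw by (simp_all add: mult_ac)
  have wsq: "w = sqrt 2" unfolding w_def ..
  have aeq: "real n * (1/2 + sqrt 2 / 4) = real n * \<alpha>" unfolding \<alpha>_def w_def ..
  define X where "X = c7*t*q^2"
  have Xb: "\<bar>X\<bar> \<le> T*q^2"
  proof -
    have "\<bar>X\<bar> = c7*\<bar>t\<bar>*q^2" unfolding X_def using c7p by (simp add: abs_mult)
    also have "\<dots> \<le> 1*T*q^2" using c7p tT by (intro mult_right_mono mult_mono) auto
    finally show ?thesis by simp
  qed
  have dr: "\<bar>real_of_int r - real n * (1/2 + sqrt 2 / 4)\<bar> \<le> T*q^2 + 1"
    unfolding aeq using r_le r_gt Xb unfolding X_def abs_le_iff by linarith
  have xe: "real_of_int x = real_of_int v + real_of_int j" unfolding x_def by simp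
  have cyz: "c5*(y+\<zeta>)*q = c5*y*q + c5*\<zeta>*q" by (simp add: algebra_simps)
  have DY: "real_of_int x - real n * sqrt 2 / 2 + 1 \<ge> c5*(y+\<zeta>)*q - 1"
    unfolding xe cyz wsq[symmetric] using v_gt j_gt by linarith
  have cZ: "c5*(y+\<zeta>)*q + Z*q \<ge> 0"
  proof (cases "y + \<zeta> \<ge> 0")
    case True thus ?thesis using c5p q0 Z0 by simp
  next
    case False
    have "c5*(y+\<zeta>) \<ge> 1*(y+\<zeta>)" using False c5p by (intro mult_right_mono_neg) auto
    hence "c5*(y+\<zeta>)*q \<ge> (y+\<zeta>)*q" using q0 by (intro mult_right_mono) auto
    moreover have "(y+\<zeta>+Z)*q \<ge> 0" using YZ q0 by simp
    ultimately show ?thesis by (simp add: algebra_simps)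
  qed
  have DZ: "real_of_int x - real n * sqrt 2 / 2 + 1 + Z*q + 1 \<ge> 0" using DY cZ by linarith
  define e where "e = - real_of_int j - c5*\<zeta>*q + c6*t*q^2"
  have a2: "2*(real n*\<alpha>) = real n + real n * w / 2" unfolding \<alpha>_def by (simp add: algebra_simps)
  have c6X: "c6*t*q^2 = 2*X" unfolding X_def c67 by simp
  have E: "e + real n - 2*real_of_int r + real_of_int x + 1 \<le> 3"
    unfolding e_def xe c6X using r_gt v_le a2 unfolding X_def by linarith
  have r0: "r \<ge> 0"
  proof -
    have "q*\<alpha> = q/2 + q*w/4" unfolding \<alpha>_def by (simp add: algebra_simps)
    moreover have "q*w \<ge> 0" using q0 wl by simp
    moreover have "q/2 \<ge> T" using Q sg T0 Z0 unfolding q_def[symmetric] by simp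
    ultimately have "q*\<alpha> \<ge> T" by linarith
    hence "q^2*(q*\<alpha>) \<ge> q^2*T" using q0 by (intro mult_left_mono) auto
    moreover have "real n*\<alpha> = q^2*(q*\<alpha>)" unfolding nq by (simp add: power2_eq_square power3_eq_cube)
    ultimately have "real n*\<alpha> \<ge> T*q^2" by (metis mult.commute)
    hence "real_of_int r > -1" using r_gt Xb unfolding X_def abs_le_iff by linarith
    thus ?thesis by simp
  qed
  have qZ: "q \<ge> 3*Z+5" using Q sig2 unfolding q_def by linarith
  have LD: "2*real_of_int r*(sqrt 2 - 1 + s)^2/(sqrt 2 + s)^2 - (real_of_int r - real_of_int x - 1) \<ge> q^2/3"
    by (rule L_Delta[OF q1 nq s_def sg T0 Z0 qZ s0 s1 dr DZ])
  define \<Delta> where "\<Delta> = real_of_int (2*r)*(1-\<rho>)^2/(2-\<rho>)^2 - real_of_int (r - x - 1)"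
  have r1: "1 - \<rho> = sqrt 2 - 1 + s" "2 - \<rho> = sqrt 2 + s" unfolding \<rho>_def w_def by simp_all
  have Dq: "\<Delta> \<ge> q^2/3" using LD unfolding \<Delta>_def r1 by simp
  have D0: "\<Delta> > 0" using Dq q0 by (smt (verit) zero_less_power divide_pos_pos)
  have PB: "norm (pker n r x) \<le> \<rho> * ((1-\<rho>) powr (r-x-1) * (2-\<rho>) powr (-r) * \<rho> powr (-(int n - r)))
            * (pi / sqrt (2*(\<rho>*\<Delta>/4)))"
    by (rule pker_bound[OF \<rho>1 \<rho>2 r0 \<Delta>_def D0])
  define W where "W = c5 * q * 2 powr (real n / 2) * (sqrt 2 + 1) powr e"
  have Pe: "Psc n t y \<zeta> = of_real W * pker n r x"
    unfolding Psc_def W_def e_def c5_def c6_def r_def j_def v_def x_def q_def by (simp add: QF(3))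
  have W0: "W \<ge> 0" unfolding W_def using c5p q0 by simp
  have nP: "norm (Psc n t y \<zeta>) = W * norm (pker n r x)" unfolding Pe using W0 by (simp add: norm_mult)
  define K where "K = (1-\<rho>) powr (real_of_int (r-x-1)) * (2-\<rho>) powr (real_of_int (-r)) * \<rho> powr (real_of_int (-(int n - r)))"
  define S where "S = (real n/2)*ln 2 + e*ln(sqrt 2+1) + ((real_of_int r - real_of_int x - 1)*ln(sqrt 2 - 1 + s) - real_of_int r*ln(sqrt 2 + s) - (real n - real_of_int r)*ln(2 - sqrt 2 - s))"
  have pos: "sqrt 2 - 1 + s > 0" "sqrt 2 + s > 0" "2 - sqrt 2 - s > 0" "sqrt 2 + 1 > 0"
    using wl wu s0 s1 unfolding w_def by auto
  have r3: "\<rho> = 2 - sqrt 2 - s" unfolding \<rho>_def w_def ..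
  have p1: "(2::real) powr (real n/2) = exp((real n/2)*ln 2)" by (simp add: powr_def mult.commute)
  have p2: "(sqrt 2 + 1) powr e = exp(e*ln(sqrt 2+1))" using pos by (simp add: powr_def mult.commute)
  have p3: "(1-\<rho>) powr (real_of_int (r-x-1)) = exp((real_of_int r - real_of_int x - 1)*ln(sqrt 2 - 1 + s))"
    unfolding r1 using pos by (simp add: powr_def mult.commute)
  have p4: "(2-\<rho>) powr (real_of_int (-r)) = exp(-(real_of_int r*ln(sqrt 2 + s)))"
    unfolding r1 using pos by (simp add: powr_def mult.commute)
  have p5: "\<rho> powr (real_of_int (-(int n - r))) = exp(-((real n - real_of_int r)*ln(2 - sqrt 2 - s)))"
    unfolding r3 using pos by (simp add: powr_def algebra_simps)
  have WK: "W * K = c5 * q * exp S"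
  proof -
    have "W * K = c5 * q * (2 powr (real n / 2) * (sqrt 2 + 1) powr e * K)" unfolding W_def by (simp add: mult_ac)
    also have "2 powr (real n / 2) * (sqrt 2 + 1) powr e * K = exp S"
      unfolding K_def p1 p2 p3 p4 p5 exp5 S_def ..
    finally show ?thesis .
  qed
  have LS: "S \<le> (6 + 4*(\<sigma>^3 + 3*(T+1)*\<sigma>^2) + 2*\<sigma> + \<sigma>*(Z+1)) - 2*c5*\<sigma>*(y+\<zeta>)"
    unfolding S_def by (rule L_S[OF q1 nq s_def sg T0 Z0 s0 s1 dr DY DZ E])
  define C1 where "C1 = 6 + 4*(\<sigma>^3 + 3*(T+1)*\<sigma>^2) + 2*\<sigma> + \<sigma>*(Z+1)"
  have A: "c5*q*\<rho>*(pi / sqrt (2*(\<rho>*\<Delta>/4))) \<le> pi * sqrt 12"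
  proof -
    have "\<rho>*\<Delta> \<ge> (1/2)*(q^2/3)" using \<rho>1 Dq q0 by (intro mult_mono) auto
    moreover have "2*(\<rho>*\<Delta>/4) = (\<rho>*\<Delta>)/2" by simp
    ultimately have b: "2*(\<rho>*\<Delta>/4) \<ge> q^2/12" by linarith
    have "sqrt (q^2/12) = q / sqrt 12" using q0 by (simp add: real_sqrt_divide)
    hence sb: "sqrt (2*(\<rho>*\<Delta>/4)) \<ge> q / sqrt 12" using b by (metis real_sqrt_le_iff)
    have qs: "q / sqrt 12 > 0" using q0 by simp
    have "pi / sqrt (2*(\<rho>*\<Delta>/4)) \<le> pi / (q / sqrt 12)" 
    proof (rule divide_left_mono[OF sb])
      have "sqrt (2*(\<rho>*\<Delta>/4)) > 0" using sb qs by linarith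
      thus "0 < sqrt (2*(\<rho>*\<Delta>/4)) * (q / sqrt 12)" using qs by (rule mult_pos_pos)
    qed simp
    also have "\<dots> = pi * sqrt 12 / q" using q0 by simp
    finally have f: "pi / sqrt (2*(\<rho>*\<Delta>/4)) \<le> pi * sqrt 12 / q" .
    have "c5*q*\<rho>*(pi / sqrt (2*(\<rho>*\<Delta>/4))) \<le> 1*q*1*(pi * sqrt 12 / q)"
    proof -
      have "pi / sqrt (2*(\<rho>*\<Delta>/4)) \<ge> 0" using D0 \<rho>1 by simp
      thus ?thesis using c5p q0 \<rho>1 \<rho>2 f by (intro mult_mono) auto
    qed
    also have "\<dots> = pi * sqrt 12" using q0 by simp
    finally show ?thesis .
  qed
  have "norm (Psc n t y \<zeta>) \<le> W * (\<rho> * K * (pi / sqrt (2*(\<rho>*\<Delta>/4))))"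
    unfolding nP using PB W0 unfolding K_def by (intro mult_left_mono) auto
  also have "\<dots> = (c5*q*\<rho>*(pi / sqrt (2*(\<rho>*\<Delta>/4)))) * exp S"
    using WK by (simp add: mult_ac)
  also have "\<dots> \<le> (pi * sqrt 12) * exp (C1 - 2*c5*\<sigma>*(y+\<zeta>))"
  proof (rule mult_mono[OF A])
    show "exp S \<le> exp (C1 - 2*c5*\<sigma>*(y+\<zeta>))" using LS unfolding C1_def by simp
  qed auto
  also have "\<dots> = (pi * sqrt 12 * exp C1) * exp(-(2*c5*\<sigma>)*(y+\<zeta>))"
    by (simp add: exp_diff exp_minus divide_inverse)
  finally show ?thesis unfolding C1_def c5_def .
qed

theorem proposition5p3:
  fixes L M \<zeta>0 :: real
  assumes "L < M"
  shows "\<exists>c > 0. \<exists>C :: real. \<exists>N :: nat. \<forall>n \<ge> N. \<forall>t \<in> {L..M}. \<forall>y \<ge> 0. \<forall>\<zeta> \<ge> \<zeta>0.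
           norm (Psc n t y \<zeta>) \<le> C * exp (- c * (y + \<zeta>))"
proof -
  define T where "T = \<bar>L\<bar> + \<bar>M\<bar>"
  define Z where "Z = \<bar>\<zeta>0\<bar>"
  define \<sigma> where "\<sigma> = 2*T+2"
  define c where "c = 2*(2 powr (-5/6))*\<sigma>"
  define C where "C = pi * sqrt 12 * exp(6 + 4*(\<sigma>^3 + 3*(T+1)*\<sigma>^2) + 2*\<sigma> + \<sigma>*(Z+1))"
  define Q0 where "Q0 = 13*\<sigma> + 3*Z + 5"
  define N where "N = nat \<lceil>Q0^3\<rceil>"
  have T0: "T \<ge> 0" unfolding T_def by simp
  have Z0: "Z \<ge> 0" unfolding Z_def by simp
  have c0: "c > 0" unfolding c_def \<sigma>_def using T0 by simp
  have Q00: "Q0 > 0" unfolding Q0_def \<sigma>_def using T0 Z0 by simp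
  have H: "\<forall>n \<ge> N. \<forall>t \<in> {L..M}. \<forall>y \<ge> 0. \<forall>\<zeta> \<ge> \<zeta>0. norm (Psc n t y \<zeta>) \<le> C * exp (- c * (y + \<zeta>))"
  proof (intro allI impI ballI)
    fix n :: nat and t y \<zeta> :: real
    assume nN: "n \<ge> N" and t: "t \<in> {L..M}" and y: "y \<ge> 0" and \<zeta>: "\<zeta> \<ge> \<zeta>0"
    have tT: "\<bar>t\<bar> \<le> T" using t unfolding T_def by auto
    have YZ: "y + \<zeta> \<ge> -Z" using y \<zeta> unfolding Z_def by linarith
    have "real n \<ge> Q0^3"
    proof -
      have "real N \<ge> Q0^3" unfolding N_def by linarith
      thus ?thesis using nN by linarith
    qed
    hence "real n powr (1/3) \<ge> (Q0^3) powr (1/3)" using Q00 by (intro powr_mono2) auto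
    moreover have "(Q0^3) powr (1/3) = Q0"
    proof -
      have e3: "Q0 powr (real 3) = Q0^3" by (rule powr_realpow[OF Q00])
      have "(Q0 powr (real 3)) powr (1/3) = Q0 powr (real 3 * (1/3))" by (rule powr_powr)
      thus ?thesis unfolding e3 using Q00 by simp
    qed
    ultimately have Q: "real n powr (1/3) \<ge> 13*\<sigma> + 3*Z + 5" unfolding Q0_def by simp
    show "norm (Psc n t y \<zeta>) \<le> C * exp (- c * (y + \<zeta>))"
      using main_bound[OF tT T0 Z0 YZ \<sigma>_def Q] unfolding C_def c_def by simp
  qed
  show ?thesis
    apply (rule exI[of _ c])
    apply (rule conjI[OF c0])
    apply (rule exI[of _ C])
    apply (rule exI[of _ N])
    by (rule H)
qed


end
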